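(* Let $\bar Q$ be a gentle bound quiver. Every face of the non-kissing complex $\mathcal K(\bar Q)$ has finite cardinality.
   Context: A gentle bound quiver is $\bar Q=(Q,I)$, $Q$ finite (paths composed left to right), $I$ admissible generated by length-two paths, each vertex with at most two incoming and two outgoing arrows, and for each arrow $\beta$ at most one $\alpha$ with $t(\alpha)=s(\beta),\alpha\beta\notin I$, at most one with $\alpha\beta\in I$, and dually at most one $\gamma$ with $s(\gamma)=t(\beta),\beta\gamma\notin I$ and at most one with $\beta\gamma\in I$. Strings: reduced words in arrows and formal inverse arrows, composable, with no factor $\pi^{\pm1}$ for a path $\pi\in I$, or length-zero words $\varepsilon_v$; identified with inverses. Blossoming quiver $\bar Q^\circledast$: add at each $v\in Q_0$ $2-\mathrm{indeg}(v)$ incoming and $2-\mathrm{outdeg}(v)$ outgoing arrows to new blossom vertices, with length-two relations at $v$ making it gentle. Walks: maximal strings of $\bar Q^\circledast$ (joining two blossom vertices), up to inversion. A substring of a walk is an occurrence of a factor (possibly a vertex) with all vertices in $Q_0$; top (bottom) if both adjacent arrows of the walk point away from (towards) it. $\omega$ kisses $\omega'$ if a string is a top substring of $\omega$ and a bottom substring of $\omega'$; self-kissing if it kisses itself. The non-kissing complex $\mathcal K(\bar Q)$ is the simplicial complex whose faces are the sets of pairwise non-kissing, non-self-kissing walks. *)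

theory Defs
  imports Main
begin

text \<open>A bound quiver: vertex set, arrow set, source and target maps and a set
of length-two relations (pairs (alpha, beta) standing for the path alpha beta,
paths composed left to right, so tgt alpha = src beta).\<close>

record ('v, 'a) bquiver =
  qverts :: "'v set"
  qarrs  :: "'a set"
  qsrc   :: "'a \<Rightarrow> 'v"
  qtgt   :: "'a \<Rightarrow> 'v"
  qrels  :: "('a \<times> 'a) set"

definition indeg :: "('v, 'a) bquiver \<Rightarrow> 'v \<Rightarrow> nat" where
  "indeg Q v = card {a \<in> qarrs Q. qtgt Q a = v}"

definition outdeg :: "('v, 'a) bquiver \<Rightarrow> 'v \<Rightarrow> nat" where
  "outdeg Q v = card {a \<in> qarrs Q. qsrc Q a = v}"

definition is_path :: "('v, 'a) bquiver \<Rightarrow> 'a list \<Rightarrow> bool" where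
  "is_path Q ps \<longleftrightarrow> set ps \<subseteq> qarrs Q \<and>
     (\<forall>i. Suc i < length ps \<longrightarrow> qtgt Q (ps ! i) = qsrc Q (ps ! Suc i))"

definition admissible :: "('v, 'a) bquiver \<Rightarrow> bool" where
  "admissible Q \<longleftrightarrow> (\<exists>N. \<forall>ps. is_path Q ps \<and> length ps = N \<longrightarrow>
      (\<exists>i. Suc i < length ps \<and> (ps ! i, ps ! Suc i) \<in> qrels Q))"

definition gentle :: "('v, 'a) bquiver \<Rightarrow> bool" where
  "gentle Q \<longleftrightarrow>
     finite (qverts Q) \<and> finite (qarrs Q) \<and>
     (\<forall>a \<in> qarrs Q. qsrc Q a \<in> qverts Q \<and> qtgt Q a \<in> qverts Q) \<and>
     qrels Q \<subseteq> {(a, b). a \<in> qarrs Q \<and> b \<in> qarrs Q \<and> qtgt Q a = qsrc Q b} \<and>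
     admissible Q \<and>
     (\<forall>v \<in> qverts Q. indeg Q v \<le> 2 \<and> outdeg Q v \<le> 2) \<and>
     (\<forall>b \<in> qarrs Q.
        card {a \<in> qarrs Q. qtgt Q a = qsrc Q b \<and> (a, b) \<notin> qrels Q} \<le> 1 \<and>
        card {a \<in> qarrs Q. qtgt Q a = qsrc Q b \<and> (a, b) \<in> qrels Q} \<le> 1 \<and>
        card {c \<in> qarrs Q. qsrc Q c = qtgt Q b \<and> (b, c) \<notin> qrels Q} \<le> 1 \<and>
        card {c \<in> qarrs Q. qsrc Q c = qtgt Q b \<and> (b, c) \<in> qrels Q} \<le> 1)"

definition blossoming :: "('v, 'a) bquiver \<Rightarrow> ('v, 'a) bquiver \<Rightarrow> bool" where
  "blossoming Q Qb \<longleftrightarrow>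
     qverts Q \<subseteq> qverts Qb \<and> qarrs Q \<subseteq> qarrs Qb \<and>
     (\<forall>a \<in> qarrs Q. qsrc Qb a = qsrc Q a \<and> qtgt Qb a = qtgt Q a) \<and>
     (\<forall>a \<in> qarrs Qb - qarrs Q.
        (qsrc Qb a \<in> qverts Q \<and> qtgt Qb a \<in> qverts Qb - qverts Q) \<or>
        (qtgt Qb a \<in> qverts Q \<and> qsrc Qb a \<in> qverts Qb - qverts Q)) \<and>
     (\<forall>b \<in> qverts Qb - qverts Q.
        card {a \<in> qarrs Qb. qsrc Qb a = b \<or> qtgt Qb a = b} = 1) \<and>
     (\<forall>v \<in> qverts Q. indeg Qb v = 2 \<and> outdeg Qb v = 2) \<and>
     qrels Qb \<inter> (qarrs Q \<times> qarrs Q) = qrels Q \<and>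
     gentle Qb"

datatype 'a letter = Fw 'a | Bw 'a

fun larr :: "'a letter \<Rightarrow> 'a" where
  "larr (Fw a) = a" | "larr (Bw a) = a"

fun linv :: "'a letter \<Rightarrow> 'a letter" where
  "linv (Fw a) = Bw a" | "linv (Bw a) = Fw a"

fun lsrc :: "('v, 'a) bquiver \<Rightarrow> 'a letter \<Rightarrow> 'v" where
  "lsrc Q (Fw a) = qsrc Q a" | "lsrc Q (Bw a) = qtgt Q a"

fun ltgt :: "('v, 'a) bquiver \<Rightarrow> 'a letter \<Rightarrow> 'v" where
  "ltgt Q (Fw a) = qtgt Q a" | "ltgt Q (Bw a) = qsrc Q a"

text \<open>A word is a start vertex together with a list of letters (arrows and
formal inverses). The empty list with start vertex v is the lazy string
epsilon_v.\<close>
type_synonym ('v, 'a) word = "'v \<times> 'a letter list"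

definition wverts :: "('v, 'a) bquiver \<Rightarrow> ('v, 'a) word \<Rightarrow> 'v list" where
  "wverts Q w = fst w # map (ltgt Q) (snd w)"

definition is_string :: "('v, 'a) bquiver \<Rightarrow> ('v, 'a) word \<Rightarrow> bool" where
  "is_string Q w \<longleftrightarrow>
     (let v = fst w; ls = snd w in
       v \<in> qverts Q \<and>
       (\<forall>x \<in> set ls. larr x \<in> qarrs Q) \<and>
       (\<forall>i < length ls. lsrc Q (ls ! i) = wverts Q w ! i) \<and>
       (\<forall>i. Suc i < length ls \<longrightarrow>
          ls ! Suc i \<noteq> linv (ls ! i) \<and>
          \<not> (\<exists>a b. ls ! i = Fw a \<and> ls ! Suc i = Fw b \<and> (a, b) \<in> qrels Q) \<and>
          \<not> (\<exists>a b. ls ! i = Bw b \<and> ls ! Suc i = Bw a \<and> (a, b) \<in> qrels Q)))"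

definition winv :: "('v, 'a) bquiver \<Rightarrow> ('v, 'a) word \<Rightarrow> ('v, 'a) word" where
  "winv Q w = (last (wverts Q w), rev (map linv (snd w)))"

definition occurs_at :: "('v, 'a) bquiver \<Rightarrow> ('v, 'a) word \<Rightarrow> ('v, 'a) word \<Rightarrow> nat \<Rightarrow> bool" where
  "occurs_at Q s w i \<longleftrightarrow>
     i + length (snd s) \<le> length (snd w) \<and>
     take (length (snd s)) (drop i (snd w)) = snd s \<and>
     wverts Q w ! i = fst s"

definition is_walk :: "('v, 'a) bquiver \<Rightarrow> ('v, 'a) word \<Rightarrow> bool" where
  "is_walk Qb w \<longleftrightarrow> is_string Qb w \<and>
     \<not> (\<exists>w' i. is_string Qb w' \<and> occurs_at Qb w w' i \<and> length (snd w) < length (snd w'))"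

definition walks :: "('v, 'a) bquiver \<Rightarrow> ('v, 'a) word set set" where
  "walks Qb = {{w, winv Qb w} | w. is_walk Qb w}"

text \<open>Substring of a walk w (in Qb): an occurrence of a factor all of whose
vertices lie in Q. Top: both adjacent arrows of the walk point away from it;
bottom: both point towards it.\<close>
definition substring_at :: "('v, 'a) bquiver \<Rightarrow> ('v, 'a) bquiver \<Rightarrow> ('v, 'a) word \<Rightarrow> ('v, 'a) word \<Rightarrow> nat \<Rightarrow> bool" where
  "substring_at Q Qb s w i \<longleftrightarrow> occurs_at Qb s w i \<and>
     (\<forall>j \<le> length (snd s). wverts Qb w ! (i + j) \<in> qverts Q)"

definition top_at :: "('v, 'a) bquiver \<Rightarrow> ('v, 'a) bquiver \<Rightarrow> ('v, 'a) word \<Rightarrow> ('v, 'a) word \<Rightarrow> nat \<Rightarrow> bool" where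
  "top_at Q Qb s w i \<longleftrightarrow> substring_at Q Qb s w i \<and>
     0 < i \<and> i + length (snd s) < length (snd w) \<and>
     (\<exists>a. snd w ! (i - 1) = Bw a) \<and> (\<exists>a. snd w ! (i + length (snd s)) = Fw a)"

definition bottom_at :: "('v, 'a) bquiver \<Rightarrow> ('v, 'a) bquiver \<Rightarrow> ('v, 'a) word \<Rightarrow> ('v, 'a) word \<Rightarrow> nat \<Rightarrow> bool" where
  "bottom_at Q Qb s w i \<longleftrightarrow> substring_at Q Qb s w i \<and>
     0 < i \<and> i + length (snd s) < length (snd w) \<and>
     (\<exists>a. snd w ! (i - 1) = Fw a) \<and> (\<exists>a. snd w ! (i + length (snd s)) = Bw a)"

definition kisses :: "('v, 'a) bquiver \<Rightarrow> ('v, 'a) bquiver \<Rightarrow> ('v, 'a) word set \<Rightarrow> ('v, 'a) word set \<Rightarrow> bool" where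
  "kisses Q Qb c c' \<longleftrightarrow>
     (\<exists>w \<in> c. \<exists>w' \<in> c'. \<exists>s i j. top_at Q Qb s w i \<and> bottom_at Q Qb s w' j)"

definition nk_faces :: "('v, 'a) bquiver \<Rightarrow> ('v, 'a) bquiver \<Rightarrow> ('v, 'a) word set set set" where
  "nk_faces Q Qb = {F. F \<subseteq> walks Qb \<and>
     (\<forall>c \<in> F. \<not> kisses Q Qb c c) \<and>
     (\<forall>c \<in> F. \<forall>c' \<in> F. \<not> kisses Q Qb c c')}"

end

theory Submission
  imports Defs
begin


definition okp :: "('v, 'a) bquiver \<Rightarrow> 'a letter \<Rightarrow> 'a letter \<Rightarrow> bool" where
  "okp G x y \<longleftrightarrow> larr x \<in> qarrs G \<and> larr y \<in> qarrs G \<and> ltgt G x = lsrc G y \<and> y \<noteq> linv x \<and>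
     \<not> (\<exists>a b. x = Fw a \<and> y = Fw b \<and> (a, b) \<in> qrels G) \<and>
     \<not> (\<exists>a b. x = Bw b \<and> y = Bw a \<and> (a, b) \<in> qrels G)"

fun isF :: "'a letter \<Rightarrow> bool" where
  "isF (Fw a) = True" | "isF (Bw a) = False"

lemma str_fst: "is_string G w \<Longrightarrow> fst w \<in> qverts G"
  by (simp add: is_string_def Let_def)

lemma str_arr: "is_string G w \<Longrightarrow> i < length (snd w) \<Longrightarrow> larr (snd w ! i) \<in> qarrs G"
  by (simp add: is_string_def Let_def)

lemma str_src: "is_string G w \<Longrightarrow> i < length (snd w) \<Longrightarrow> lsrc G (snd w ! i) = wverts G w ! i"
  by (simp add: is_string_def Let_def)

lemma wverts_Suc: "i < length (snd w) \<Longrightarrow> wverts G w ! Suc i = ltgt G (snd w ! i)"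
  by (simp add: wverts_def)

lemma wverts_0: "wverts G w ! 0 = fst w"
  by (simp add: wverts_def)

lemma str_ok: "is_string G w \<Longrightarrow> Suc i < length (snd w) \<Longrightarrow> okp G (snd w ! i) (snd w ! Suc i)"
proof -
  assume s: "is_string G w" and i: "Suc i < length (snd w)"
  have "ltgt G (snd w ! i) = lsrc G (snd w ! Suc i)"
    using str_src[OF s i] wverts_Suc[of i w G] i by simp
  then show ?thesis using s i str_arr[OF s, of i] str_arr[OF s, of "Suc i"]
    unfolding okp_def is_string_def Let_def by auto
qed

lemma string_intro:
  assumes "fst w \<in> qverts G" "\<forall>i < length (snd w). larr (snd w ! i) \<in> qarrs G"
    "snd w \<noteq> [] \<Longrightarrow> lsrc G (snd w ! 0) = fst w"
    "\<forall>i. Suc i < length (snd w) \<longrightarrow> okp G (snd w ! i) (snd w ! Suc i)"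
  shows "is_string G w"
proof -
  have src: "lsrc G (snd w ! i) = wverts G w ! i" if "i < length (snd w)" for i
  proof (cases i)
    case 0 then show ?thesis using assms(3) that wverts_0[of G w] by auto
  next
    case (Suc j)
    then have "okp G (snd w ! j) (snd w ! Suc j)" using assms(4) that by auto
    then show ?thesis using Suc that wverts_Suc[of j w G] by (simp add: okp_def)
  qed
  show ?thesis unfolding is_string_def Let_def
    using assms src by (auto simp: okp_def in_set_conv_nth)
qed

lemma okp_inv: "okp G x y \<Longrightarrow> okp G (linv y) (linv x)"
  by (cases x; cases y) (auto simp: okp_def)

lemma linv_linv[simp]: "linv (linv x) = x" by (cases x) auto
lemma isF_linv[simp]: "isF (linv x) = (\<not> isF x)" by (cases x) auto

lemma card_le1_eq: "finite S \<Longrightarrow> card S \<le> 1 \<Longrightarrow> a \<in> S \<Longrightarrow> b \<in> S \<Longrightarrow> a = b"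
  using card_le_Suc0_iff_eq by fastforce

lemma card_le2_three: "finite S \<Longrightarrow> card S \<le> 2 \<Longrightarrow> a \<in> S \<Longrightarrow> b \<in> S \<Longrightarrow> c \<in> S
   \<Longrightarrow> a \<noteq> b \<Longrightarrow> a \<noteq> c \<Longrightarrow> b = c"
proof (rule ccontr)
  assume h: "finite S" "card S \<le> 2" "a \<in> S" "b \<in> S" "c \<in> S" "a \<noteq> b" "a \<noteq> c" "b \<noteq> c"
  then have "card {a, b, c} \<le> card S" by (intro card_mono) auto
  moreover have "card {a, b, c} = 3" using h by auto
  ultimately show False using h by simp
qed

lemma gentle_cont:
  assumes g: "gentle G" and o1: "okp G x y1" and o2: "okp G x y2" and d: "isF y1 = isF y2"
  shows "y1 = y2"
proof -
  have fin: "finite (qarrs G)" using g by (simp add: gentle_def)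
  have ends: "\<And>a. a \<in> qarrs G \<Longrightarrow> qsrc G a \<in> qverts G \<and> qtgt G a \<in> qverts G"
    using g by (simp add: gentle_def)
  have deg: "\<And>v. v \<in> qverts G \<Longrightarrow> indeg G v \<le> 2 \<and> outdeg G v \<le> 2"
    using g by (simp add: gentle_def)
  have c1: "\<And>b. b \<in> qarrs G \<Longrightarrow> card {a \<in> qarrs G. qtgt G a = qsrc G b \<and> (a, b) \<notin> qrels G} \<le> 1"
    using g by (simp add: gentle_def)
  have c3: "\<And>b. b \<in> qarrs G \<Longrightarrow> card {c \<in> qarrs G. qsrc G c = qtgt G b \<and> (b, c) \<notin> qrels G} \<le> 1"
    using g by (simp add: gentle_def)
  show ?thesis
  proof (cases x)
    case (Fw a)
    have a: "a \<in> qarrs G" using o1 Fw by (simp add: okp_def)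
    show ?thesis
    proof (cases y1)
      case (Fw b1)
      then obtain b2 where y2: "y2 = Fw b2" using d by (cases y2) auto
      let ?S = "{c \<in> qarrs G. qsrc G c = qtgt G a \<and> (a, c) \<notin> qrels G}"
      have i1: "b1 \<in> ?S" using o1 \<open>x = Fw a\<close> Fw unfolding okp_def by auto
      have i2: "b2 \<in> ?S" using o2 \<open>x = Fw a\<close> y2 unfolding okp_def by auto
      have fS: "finite ?S" using fin by simp
      have "b1 = b2" using card_le1_eq[OF fS c3[OF a] i1 i2] .
      then show ?thesis using Fw y2 by simp
    next
      case (Bw b1)
      then obtain b2 where y2: "y2 = Bw b2" using d by (cases y2) auto
      let ?S = "{c \<in> qarrs G. qtgt G c = qtgt G a}"
      have i1: "b1 \<in> ?S" "b1 \<noteq> a" using o1 \<open>x = Fw a\<close> Bw unfolding okp_def by auto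
      have i2: "b2 \<in> ?S" "b2 \<noteq> a" using o2 \<open>x = Fw a\<close> y2 unfolding okp_def by auto
      have fS: "finite ?S" using fin by simp
      have cS: "card ?S \<le> 2" using deg[of "qtgt G a"] ends[OF a] by (simp add: indeg_def)
      have aS: "a \<in> ?S" using a by simp
      have "b1 = b2" using card_le2_three[OF fS cS aS i1(1) i2(1)] i1(2) i2(2) by auto
      then show ?thesis using Bw y2 by simp
    qed
  next
    case (Bw a)
    have a: "a \<in> qarrs G" using o1 Bw by (simp add: okp_def)
    show ?thesis
    proof (cases y1)
      case (Fw b1)
      then obtain b2 where y2: "y2 = Fw b2" using d by (cases y2) auto
      let ?S = "{c \<in> qarrs G. qsrc G c = qsrc G a}"
      have i1: "b1 \<in> ?S" "b1 \<noteq> a" using o1 \<open>x = Bw a\<close> Fw unfolding okp_def by auto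
      have i2: "b2 \<in> ?S" "b2 \<noteq> a" using o2 \<open>x = Bw a\<close> y2 unfolding okp_def by auto
      have fS: "finite ?S" using fin by simp
      have cS: "card ?S \<le> 2" using deg[of "qsrc G a"] ends[OF a] by (simp add: outdeg_def)
      have aS: "a \<in> ?S" using a by simp
      have "b1 = b2" using card_le2_three[OF fS cS aS i1(1) i2(1)] i1(2) i2(2) by auto
      then show ?thesis using Fw y2 by simp
    next
      case (Bw b1)
      then obtain b2 where y2: "y2 = Bw b2" using d by (cases y2) auto
      let ?S = "{c \<in> qarrs G. qtgt G c = qsrc G a \<and> (c, a) \<notin> qrels G}"
      have i1: "b1 \<in> ?S" using o1 \<open>x = Bw a\<close> Bw unfolding okp_def by auto
      have i2: "b2 \<in> ?S" using o2 \<open>x = Bw a\<close> y2 unfolding okp_def by auto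
      have fS: "finite ?S" using fin by simp
      have "b1 = b2" using card_le1_eq[OF fS c1[OF a] i1 i2] .
      then show ?thesis using Bw y2 by simp
    qed
  qed
qed

lemma gentle_pred:
  assumes g: "gentle G" and o1: "okp G z1 y" and o2: "okp G z2 y" and d: "isF z1 = isF z2"
  shows "z1 = z2"
proof -
  have "linv z1 = linv z2"
    using gentle_cont[OF g okp_inv[OF o1] okp_inv[OF o2]] d by simp
  then show ?thesis by (metis linv_linv)
qed



locale gset =
  fixes Q Qb :: "('v, 'a) bquiver" and F :: "('v, 'a) word set set"
  assumes gQ: "gentle Q" and bl: "blossoming Q Qb" and face: "F \<in> nk_faces Q Qb"
begin

lemma gQb: "gentle Qb" using bl by (simp add: blossoming_def)

lemma finQb: "finite (qarrs Qb)" "finite (qverts Qb)" using gQb by (auto simp: gentle_def)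

lemma endsQb: "a \<in> qarrs Qb \<Longrightarrow> qsrc Qb a \<in> qverts Qb \<and> qtgt Qb a \<in> qverts Qb"
  using gQb by (simp add: gentle_def)

lemma lsrc_in: "larr x \<in> qarrs Qb \<Longrightarrow> lsrc Qb x \<in> qverts Qb \<and> ltgt Qb x \<in> qverts Qb"
  by (cases x) (auto dest: endsQb)

lemma interior:
  assumes s: "is_string Qb w" and i0: "0 < i" and il: "i < length (snd w)"
  shows "wverts Qb w ! i \<in> qverts Q"
proof (rule ccontr)
  assume nu: "wverts Qb w ! i \<notin> qverts Q"
  obtain j where j: "i = Suc j" using i0 by (cases i) auto
  define x where "x = snd w ! j"
  define y where "y = snd w ! i"
  have ok: "okp Qb x y" using str_ok[OF s, of j] j il x_def y_def by simp
  have u1: "wverts Qb w ! i = ltgt Qb x" using wverts_Suc[of j w Qb] j il x_def by simp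
  have u2: "wverts Qb w ! i = lsrc Qb y" using str_src[OF s il] y_def by simp
  have QQ: "\<forall>a \<in> qarrs Q. qsrc Q a \<in> qverts Q \<and> qtgt Q a \<in> qverts Q"
    using gQ by (simp add: gentle_def)
  have same: "\<forall>a \<in> qarrs Q. qsrc Qb a = qsrc Q a \<and> qtgt Qb a = qtgt Q a"
    using bl by (simp add: blossoming_def)
  have xn: "larr x \<notin> qarrs Q"
  proof
    assume "larr x \<in> qarrs Q"
    then show False using QQ same nu u1 by (cases x) auto
  qed
  have yn: "larr y \<notin> qarrs Q"
  proof
    assume "larr y \<in> qarrs Q"
    then show False using QQ same nu u2 by (cases y) auto
  qed
  have xa: "larr x \<in> qarrs Qb" and ya: "larr y \<in> qarrs Qb" using ok by (auto simp: okp_def)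
  have uQb: "wverts Qb w ! i \<in> qverts Qb" using lsrc_in[OF xa] u1 by simp
  define u where "u = wverts Qb w ! i"
  let ?S = "{a \<in> qarrs Qb. qsrc Qb a = u \<or> qtgt Qb a = u}"
  have cS: "card ?S = 1" using bl uQb nu u_def by (auto simp: blossoming_def)
  have fS: "finite ?S" using finQb by simp
  have xS: "larr x \<in> ?S" using xa u1 u_def by (cases x) auto
  have yS: "larr y \<in> ?S" using ya u2 u_def by (cases y) auto
  have eq: "larr x = larr y" using card_le1_eq[OF fS _ xS yS] cS by simp
  have bl2: "(qsrc Qb (larr x) \<in> qverts Q \<and> qtgt Qb (larr x) \<in> qverts Qb - qverts Q) \<or>
        (qtgt Qb (larr x) \<in> qverts Q \<and> qsrc Qb (larr x) \<in> qverts Qb - qverts Q)"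
    using bl xa xn by (auto simp: blossoming_def)
  show False
    using ok eq bl2 u1 u2 nu u_def by (cases x; cases y) (auto simp: okp_def)
qed

definition R where "R = {w. is_walk Qb w \<and> (\<exists>c\<in>F. w \<in> c)}"

lemma R_walk: "w \<in> R \<Longrightarrow> is_walk Qb w" by (simp add: R_def)
lemma R_str: "w \<in> R \<Longrightarrow> is_string Qb w" by (simp add: R_def is_walk_def)

lemma no_kiss: "a \<in> R \<Longrightarrow> b \<in> R \<Longrightarrow> top_at Q Qb s a i \<Longrightarrow> bottom_at Q Qb s b j \<Longrightarrow> False"
proof -
  assume a: "a \<in> R" and b: "b \<in> R" and t: "top_at Q Qb s a i" and bo: "bottom_at Q Qb s b j"
  obtain ca where ca: "ca \<in> F" "a \<in> ca" using a by (auto simp: R_def)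
  obtain cb where cb: "cb \<in> F" "b \<in> cb" using b by (auto simp: R_def)
  have "kisses Q Qb ca cb" unfolding kisses_def using ca cb t bo by blast
  then show False using face ca cb by (auto simp: nk_faces_def)
qed

lemma mk_sub:
  assumes s: "is_string Qb w" and i0: "0 < i" and im: "i + m < length (snd w)"
  shows "substring_at Q Qb (wverts Qb w ! i, take m (drop i (snd w))) w i"
proof -
  have len: "length (take m (drop i (snd w))) = m" using im by simp
  show ?thesis unfolding substring_at_def occurs_at_def
    using len im interior[OF s] i0 by auto
qed

lemma mk_top:
  assumes s: "is_string Qb w" and i0: "0 < i" and im: "i + m < length (snd w)"
    and l: "\<not> isF (snd w ! (i - 1))" and r: "isF (snd w ! (i + m))"
  shows "top_at Q Qb (wverts Qb w ! i, take m (drop i (snd w))) w i"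
proof -
  have len: "length (take m (drop i (snd w))) = m" using im by simp
  have "\<exists>a. snd w ! (i - 1) = Bw a" using l by (cases "snd w ! (i - 1)") auto
  moreover have "\<exists>a. snd w ! (i + m) = Fw a" using r by (cases "snd w ! (i + m)") auto
  ultimately show ?thesis unfolding top_at_def using mk_sub[OF s i0 im] len im i0 by simp
qed

lemma mk_bottom:
  assumes s: "is_string Qb w" and i0: "0 < i" and im: "i + m < length (snd w)"
    and l: "isF (snd w ! (i - 1))" and r: "\<not> isF (snd w ! (i + m))"
  shows "bottom_at Q Qb (wverts Qb w ! i, take m (drop i (snd w))) w i"
proof -
  have len: "length (take m (drop i (snd w))) = m" using im by simp
  have "\<exists>a. snd w ! (i - 1) = Fw a" using l by (cases "snd w ! (i - 1)") auto
  moreover have "\<exists>a. snd w ! (i + m) = Bw a" using r by (cases "snd w ! (i + m)") auto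
  ultimately show ?thesis unfolding bottom_at_def using mk_sub[OF s i0 im] len im i0 by simp
qed

lemma kiss2:
  assumes a: "a \<in> R" and b: "b \<in> R" and i0: "0 < i" and i0': "0 < i'" and m0: "0 < m"
    and im: "i + m < length (snd a)" and im': "i' + m < length (snd b)"
    and eq: "\<forall>j<m. snd a ! (i + j) = snd b ! (i' + j)"
    and l: "\<not> isF (snd a ! (i - 1))" and r: "isF (snd a ! (i + m))"
    and l': "isF (snd b ! (i' - 1))" and r': "\<not> isF (snd b ! (i' + m))"
  shows False
proof -
  have t: "top_at Q Qb (wverts Qb a ! i, take m (drop i (snd a))) a i"
    using mk_top[OF R_str[OF a] i0 im l r] .
  have bo: "bottom_at Q Qb (wverts Qb b ! i', take m (drop i' (snd b))) b i'"
    using mk_bottom[OF R_str[OF b] i0' im' l' r'] .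
  have v: "wverts Qb a ! i = wverts Qb b ! i'"
    using str_src[OF R_str[OF a], of i] str_src[OF R_str[OF b], of i'] eq m0 im im' by auto
  have L: "take m (drop i (snd a)) = take m (drop i' (snd b))"
    by (rule nth_equalityI) (use im im' eq in auto)
  show False using no_kiss[OF a b t] bo v L by simp
qed

lemma ext_contra:
  assumes w: "is_walk Qb w" and ne: "0 < length (snd w)" and ok: "okp Qb z (snd w ! 0)"
  shows False
proof -
  have s: "is_string Qb w" using w by (simp add: is_walk_def)
  define w' where "w' = (lsrc Qb z, z # snd w)"
  have za: "larr z \<in> qarrs Qb" using ok by (simp add: okp_def)
  have s': "is_string Qb w'"
  proof (rule string_intro)
    show "fst w' \<in> qverts Qb" using lsrc_in[OF za] w'_def by simp
    show "\<forall>i<length (snd w'). larr (snd w' ! i) \<in> qarrs Qb"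
      using za str_arr[OF s] w'_def by (auto simp: nth_Cons split: nat.split)
    show "lsrc Qb (snd w' ! 0) = fst w'" using w'_def by simp
    show "\<forall>i. Suc i < length (snd w') \<longrightarrow> okp Qb (snd w' ! i) (snd w' ! Suc i)"
    proof (intro allI impI)
      fix i assume "Suc i < length (snd w')"
      then show "okp Qb (snd w' ! i) (snd w' ! Suc i)"
        using ok str_ok[OF s] w'_def by (cases i) auto
    qed
  qed
  have f: "fst w = ltgt Qb z"
    using str_src[OF s ne] wverts_0[of Qb w] ok by (simp add: okp_def)
  have occ: "occurs_at Qb w w' 1"
    unfolding occurs_at_def using w'_def f wverts_Suc[of 0 w' Qb] by simp
  have "length (snd w) < length (snd w')" using w'_def by simp
  then show False using w s' occ unfolding is_walk_def by blast
qed

end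



context gset
begin

definition br where
  "br w w' k \<longleftrightarrow> w \<in> R \<and> w' \<in> R \<and> k < length (snd w) \<and> k < length (snd w') \<and>
     fst w = fst w' \<and> take k (snd w) = take k (snd w') \<and> snd w ! k \<noteq> snd w' ! k"

lemma take_nth_eq: "take k xs = take k ys \<Longrightarrow> j < k \<Longrightarrow> xs ! j = ys ! j"
  by (metis nth_take)

lemma br_choose:
  assumes b: "br w w' k" and k0: "0 < k"
  shows "\<exists>a b. a \<in> R \<and> b \<in> R \<and> isF (snd a ! k) \<and> \<not> isF (snd b ! k) \<and>
      k < length (snd a) \<and> k < length (snd b) \<and>
      (\<forall>j<k. snd a ! j = snd w ! j) \<and> (\<forall>j<k. snd b ! j = snd w ! j)"
proof -
  have w: "w \<in> R" and w': "w' \<in> R" and kl: "k < length (snd w)" and kl': "k < length (snd w')"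
    and tk: "take k (snd w) = take k (snd w')" and ne: "snd w ! k \<noteq> snd w' ! k"
    using b by (auto simp: br_def)
  obtain j where j: "k = Suc j" using k0 by (cases k) auto
  have xe: "snd w ! j = snd w' ! j" using take_nth_eq[OF tk] j by simp
  have o1: "okp Qb (snd w ! j) (snd w ! k)" using str_ok[OF R_str[OF w], of j] j kl by simp
  have o2: "okp Qb (snd w ! j) (snd w' ! k)" using str_ok[OF R_str[OF w'], of j] j kl' xe by simp
  have d: "isF (snd w ! k) \<noteq> isF (snd w' ! k)" using gentle_cont[OF gQb o1 o2] ne by auto
  have eqs: "\<forall>j<k. snd w' ! j = snd w ! j" using take_nth_eq[OF tk] by auto
  show ?thesis
  proof (cases "isF (snd w ! k)")
    case True
    then show ?thesis using d w w' kl kl' eqs by (intro exI[of _ w] exI[of _ w']) auto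
  next
    case False
    then show ?thesis using d w w' kl kl' eqs by (intro exI[of _ w'] exI[of _ w]) auto
  qed
qed

lemma core:
  assumes b1: "br w1 w1' k1" and b2: "br w2 w2' k2" and k1: "0 < k1" and k2: "0 < k2"
    and last: "snd w1 ! (k1 - 1) = snd w2 ! (k2 - 1)"
  shows "k1 = k2 \<and> take k1 (snd w1) = take k2 (snd w2) \<and> fst w1 = fst w2"
proof -
  have w1: "w1 \<in> R" and l1: "k1 < length (snd w1)" using b1 by (auto simp: br_def)
  have w2: "w2 \<in> R" and l2: "k2 < length (snd w2)" using b2 by (auto simp: br_def)
  define P where "P m \<longleftrightarrow> m \<le> k1 \<and> m \<le> k2 \<and> (\<forall>j<m. snd w1 ! (k1 - m + j) = snd w2 ! (k2 - m + j))" for m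
  define M where "M = {m. P m}"
  have P1: "P 1" using k1 k2 last by (auto simp: P_def)
  have fM: "finite M" unfolding M_def P_def by (rule finite_subset[of _ "{..k1}"]) auto
  define m where "m = Max M"
  have Pm: "P m" using Max_in[OF fM] P1 M_def m_def by auto
  have m1: "1 \<le> m" using Max_ge[OF fM, of 1] P1 M_def m_def by auto
  have step: "P (Suc m)" if "m < k1" "m < k2" "snd w1 ! (k1 - m - 1) = snd w2 ! (k2 - m - 1)"
  proof -
    have "\<forall>j<Suc m. snd w1 ! (k1 - Suc m + j) = snd w2 ! (k2 - Suc m + j)"
    proof (intro allI impI)
      fix j assume j: "j < Suc m"
      show "snd w1 ! (k1 - Suc m + j) = snd w2 ! (k2 - Suc m + j)"
      proof (cases j)
        case 0 then show ?thesis using that by simp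
      next
        case (Suc j')
        then have e: "k1 - Suc m + j = k1 - m + j'" "k2 - Suc m + j = k2 - m + j'" using that by auto
        have "\<forall>j<m. snd w1 ! (k1 - m + j) = snd w2 ! (k2 - m + j)" using Pm unfolding P_def by blast
        then have h: "snd w1 ! (k1 - m + j') = snd w2 ! (k2 - m + j')" using Suc j by simp
        show ?thesis by (simp only: e h)
      qed
    qed
    then show ?thesis using that by (auto simp: P_def)
  qed
  have notstep: "\<not> P (Suc m)" using Max_ge[OF fM, of "Suc m"] M_def m_def by auto
  have Pe: "\<forall>j<m. snd w1 ! (k1 - m + j) = snd w2 ! (k2 - m + j)" "m \<le> k1" "m \<le> k2"
    using Pm by (auto simp: P_def)
  show ?thesis
  proof (cases "m < k1 \<and> m < k2")
    case True
    define i1 where "i1 = k1 - m"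
    define i2 where "i2 = k2 - m"
    have i1: "0 < i1" "i1 + m = k1" and i2: "0 < i2" "i2 + m = k2" using True i1_def i2_def by auto
    define z1 where "z1 = snd w1 ! (i1 - 1)"
    define z2 where "z2 = snd w2 ! (i2 - 1)"
    have zne: "z1 \<noteq> z2" using step True notstep z1_def z2_def i1_def i2_def by auto
    have ye: "snd w1 ! i1 = snd w2 ! i2" using Pe(1)[rule_format, of 0] m1 i1_def i2_def by simp
    have oz1: "okp Qb z1 (snd w1 ! i1)" using str_ok[OF R_str[OF w1], of "i1 - 1"] i1 l1 z1_def by simp
    have oz2: "okp Qb z2 (snd w1 ! i1)" using str_ok[OF R_str[OF w2], of "i2 - 1"] i2 l2 z2_def ye by simp
    have dz: "isF z1 \<noteq> isF z2" using gentle_pred[OF gQb oz1 oz2] zne by auto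
    obtain a1 b1' where A1: "a1 \<in> R" "b1' \<in> R" "isF (snd a1 ! k1)" "\<not> isF (snd b1' ! k1)"
      "k1 < length (snd a1)" "k1 < length (snd b1')"
      "\<forall>j<k1. snd a1 ! j = snd w1 ! j" "\<forall>j<k1. snd b1' ! j = snd w1 ! j"
      using br_choose[OF b1 k1] by blast
    obtain a2 b2' where A2: "a2 \<in> R" "b2' \<in> R" "isF (snd a2 ! k2)" "\<not> isF (snd b2' ! k2)"
      "k2 < length (snd a2)" "k2 < length (snd b2')"
      "\<forall>j<k2. snd a2 ! j = snd w2 ! j" "\<forall>j<k2. snd b2' ! j = snd w2 ! j"
      using br_choose[OF b2 k2] by blast
    have com: "\<forall>j<m. snd w1 ! (i1 + j) = snd w2 ! (i2 + j)" using Pe(1) i1_def i2_def by simp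
    show ?thesis
    proof (cases "isF z1")
      case False
      then have "isF z2" using dz by simp
      show ?thesis
      proof (rule kiss2[OF A1(1) A2(2) i1(1) i2(1), of m, THEN FalseE])
        show "0 < m" using m1 by simp
        show "i1 + m < length (snd a1)" using i1 A1 by simp
        show "i2 + m < length (snd b2')" using i2 A2 by simp
        show "\<forall>j<m. snd a1 ! (i1 + j) = snd b2' ! (i2 + j)" using com A1(7) A2(8) i1 i2 by auto
        show "\<not> isF (snd a1 ! (i1 - 1))" using False A1(7) i1 z1_def by simp
        show "isF (snd a1 ! (i1 + m))" using A1 i1 by simp
        show "isF (snd b2' ! (i2 - 1))" using \<open>isF z2\<close> A2(8) i2 z2_def by simp
        show "\<not> isF (snd b2' ! (i2 + m))" using A2 i2 by simp
      qed
    next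
      case True
      then have "\<not> isF z2" using dz by simp
      show ?thesis
      proof (rule kiss2[OF A2(1) A1(2) i2(1) i1(1), of m, THEN FalseE])
        show "0 < m" using m1 by simp
        show "i2 + m < length (snd a2)" using i2 A2 by simp
        show "i1 + m < length (snd b1')" using i1 A1 by simp
        show "\<forall>j<m. snd a2 ! (i2 + j) = snd b1' ! (i1 + j)" using com A1(8) A2(7) i1 i2 by auto
        show "\<not> isF (snd a2 ! (i2 - 1))" using \<open>\<not> isF z2\<close> A2(7) i2 z2_def by simp
        show "isF (snd a2 ! (i2 + m))" using A2 i2 by simp
        show "isF (snd b1' ! (i1 - 1))" using True A1(8) i1 z1_def by simp
        show "\<not> isF (snd b1' ! (i1 + m))" using A1 i1 by simp
      qed
    qed
  next
    case False
    then consider "m = k1" "m = k2" | "m = k1" "m < k2" | "m = k2" "m < k1" using Pe by linarith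
    then show ?thesis
    proof cases
      case 1
      have tk: "take k1 (snd w1) = take k2 (snd w2)"
        by (rule nth_equalityI) (use 1 Pe l1 l2 in auto)
      have e0: "snd w1 ! 0 = snd w2 ! 0" using Pe(1)[rule_format, of 0] 1 k1 by simp
      have "fst w1 = lsrc Qb (snd w1 ! 0)"
        using str_src[OF R_str[OF w1], of 0] wverts_0[of Qb w1] k1 l1 by fastforce
      moreover have "fst w2 = lsrc Qb (snd w2 ! 0)"
        using str_src[OF R_str[OF w2], of 0] wverts_0[of Qb w2] k2 l2 by fastforce
      ultimately have "fst w1 = fst w2" using e0 by simp
      then show ?thesis using 1 tk by simp
    next
      case 2
      define d where "d = k2 - k1"
      have d: "0 < d" "d + k1 = k2" using 2 d_def by auto
      have e0: "snd w1 ! 0 = snd w2 ! d" using Pe(1)[rule_format, of 0] 2 d_def k1 by simp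
      have "okp Qb (snd w2 ! (d - 1)) (snd w1 ! 0)"
        using str_ok[OF R_str[OF w2], of "d - 1"] d l2 e0 by simp
      moreover have "0 < length (snd w1)" using l1 by linarith
      ultimately have False using ext_contra[OF R_walk[OF w1]] by blast
      then show ?thesis ..
    next
      case 3
      define d where "d = k1 - k2"
      have d: "0 < d" "d + k2 = k1" using 3 d_def by auto
      have e0: "snd w2 ! 0 = snd w1 ! d" using Pe(1)[rule_format, of 0] 3 d_def k2 by simp
      have "okp Qb (snd w1 ! (d - 1)) (snd w2 ! 0)"
        using str_ok[OF R_str[OF w1], of "d - 1"] d l1 e0 by simp
      moreover have "0 < length (snd w2)" using l2 by linarith
      ultimately have False using ext_contra[OF R_walk[OF w2]] by blast
      then show ?thesis ..
    qed
  qed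
qed

end



context gset
begin

definition lcps where
  "lcps w = {k. \<exists>w'\<in>R. w' \<noteq> w \<and> fst w' = fst w \<and> k \<le> length (snd w) \<and> take k (snd w') = take k (snd w)}"

lemma lcp_lt:
  assumes w: "w \<in> R" and w': "w' \<in> R" and ne: "w' \<noteq> w" and f: "fst w' = fst w"
    and t: "take k (snd w') = take k (snd w)" and k: "k \<le> length (snd w)"
  shows "k < length (snd w)"
proof (rule ccontr)
  assume "\<not> k < length (snd w)"
  then have kk: "k = length (snd w)" using k by simp
  have t2: "take k (snd w') = snd w" using t kk by simp
  have lt: "length (take k (snd w')) = k" using t2 kk by simp
  have lw': "k \<le> length (snd w')" using lt by simp
  have occ: "occurs_at Qb w w' 0"
    unfolding occurs_at_def using lw' t2 kk f wverts_0[of Qb w'] by simp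
  have nx: "\<not> (\<exists>w'' i. is_string Qb w'' \<and> occurs_at Qb w w'' i \<and> length (snd w) < length (snd w''))"
    using R_walk[OF w] unfolding is_walk_def by simp
  have "\<not> length (snd w) < length (snd w')"
  proof
    assume "length (snd w) < length (snd w')"
    then show False using nx R_str[OF w'] occ by blast
  qed
  then have "length (snd w') = k" using kk lw' by simp
  then have "snd w' = snd w" using t2 by simp
  then have "w' = w" using f by (simp add: prod_eq_iff)
  then show False using ne by simp
qed

lemma lcps_fin: "finite (lcps w)"
  by (rule finite_subset[of _ "{..length (snd w)}"]) (auto simp: lcps_def)

lemma lcps_lt: "w \<in> R \<Longrightarrow> k \<in> lcps w \<Longrightarrow> k < length (snd w)"
  unfolding lcps_def using lcp_lt by blast

lemma maxprop:
  assumes w: "w \<in> R" and ne: "lcps w \<noteq> {}"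
  shows "\<exists>w'. br w w' (Max (lcps w))"
proof -
  define k where "k = Max (lcps w)"
  have kin: "k \<in> lcps w" using Max_in[OF lcps_fin ne] k_def by simp
  then obtain w' where w': "w' \<in> R" "w' \<noteq> w" "fst w' = fst w" "k \<le> length (snd w)"
    "take k (snd w') = take k (snd w)" unfolding lcps_def by blast
  have kl: "k < length (snd w)" using lcp_lt[OF w w'(1) w'(2) w'(3) w'(5) w'(4)] .
  have "length (take k (snd w')) = k" using w'(5) kl by simp
  then have kle: "k \<le> length (snd w')" by simp
  have kl': "k < length (snd w')"
    by (rule lcp_lt[OF w'(1) w]) (use w' kle in auto)
  have "snd w ! k \<noteq> snd w' ! k"
  proof
    assume e: "snd w ! k = snd w' ! k"
    have "take (Suc k) (snd w') = take (Suc k) (snd w)"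
      using w'(5) e kl kl' by (simp add: take_Suc_conv_app_nth)
    then have "Suc k \<in> lcps w" unfolding lcps_def using w' kl by auto
    then have "Suc k \<le> k" using Max_ge[OF lcps_fin] k_def by simp
    then show False by simp
  qed
  then have "br w w' k" unfolding br_def using w w' kl kl' by simp
  then show ?thesis using k_def by blast
qed

definition fmap where
  "fmap w = (if lcps w = {} then (Inl (fst w), None)
     else (if Max (lcps w) = 0 then Inl (fst w) else Inr (snd w ! (Max (lcps w) - 1)),
           Some (snd w ! Max (lcps w))))"

lemma fmap_inj: "inj_on fmap R"
proof (rule inj_onI, rule ccontr)
  fix w1 w2 assume w1: "w1 \<in> R" and w2: "w2 \<in> R" and fe: "fmap w1 = fmap w2" and ne: "w1 \<noteq> w2"
  show False
  proof (cases "lcps w1 = {}")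
    case True
    have "lcps w2 = {}" using fe True by (auto simp: fmap_def split: if_splits)
    then have "fst w1 = fst w2" using fe True by (auto simp: fmap_def)
    then have "0 \<in> lcps w1" unfolding lcps_def using w2 ne by auto
    then show False using True by simp
  next
    case False
    have F2: "lcps w2 \<noteq> {}" using fe False by (auto simp: fmap_def split: if_splits)
    define k1 where "k1 = Max (lcps w1)"
    define k2 where "k2 = Max (lcps w2)"
    have k1l: "k1 < length (snd w1)" using lcps_lt[OF w1] Max_in[OF lcps_fin False] k1_def by simp
    have k2l: "k2 < length (snd w2)" using lcps_lt[OF w2] Max_in[OF lcps_fin F2] k2_def by simp
    have ge: "\<And>k. k \<in> lcps w1 \<Longrightarrow> k \<le> k1" using Max_ge[OF lcps_fin] k1_def by simp
    have fe': "(if k1 = 0 then Inl (fst w1) else Inr (snd w1 ! (k1 - 1)), Some (snd w1 ! k1))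
        = (if k2 = 0 then Inl (fst w2) else Inr (snd w2 ! (k2 - 1)), Some (snd w2 ! k2))"
    proof -
      have "fmap w1 = (if k1 = 0 then Inl (fst w1) else Inr (snd w1 ! (k1 - 1)), Some (snd w1 ! k1))"
        unfolding fmap_def k1_def using False by simp
      moreover have "fmap w2 = (if k2 = 0 then Inl (fst w2) else Inr (snd w2 ! (k2 - 1)), Some (snd w2 ! k2))"
        unfolding fmap_def k2_def using F2 by simp
      ultimately show ?thesis using fe by simp
    qed
    have nx: "snd w1 ! k1 = snd w2 ! k2" using fe' by simp
    show False
    proof (cases "k1 = 0")
      case True
      have k20: "k2 = 0" and ff: "fst w1 = fst w2" using fe' True by (auto split: if_splits)
      have "take 1 (snd w2) = take 1 (snd w1)"
        using nx True k20 k1l k2l by (cases "snd w1"; cases "snd w2") auto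
      moreover have "1 \<le> length (snd w1)" using k1l True by linarith
      ultimately have "1 \<in> lcps w1" unfolding lcps_def using w2 ne ff by (intro CollectI bexI[of _ w2]) auto
      then show False using ge True by fastforce
    next
      case False
      have k20: "k2 \<noteq> 0" and lx: "snd w1 ! (k1 - 1) = snd w2 ! (k2 - 1)"
        using fe' False by (auto split: if_splits)
      obtain w1' where b1: "br w1 w1' k1" using maxprop[OF w1 \<open>lcps w1 \<noteq> {}\<close>] k1_def by blast
      obtain w2' where b2: "br w2 w2' k2" using maxprop[OF w2 F2] k2_def by blast
      have c: "k1 = k2 \<and> take k1 (snd w1) = take k2 (snd w2) \<and> fst w1 = fst w2"
        using core[OF b1 b2 _ _ lx] False k20 by blast
      have ck: "k1 = k2" and ct: "take k1 (snd w1) = take k2 (snd w2)" and cf: "fst w1 = fst w2"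
        using c by auto
      have "take (Suc k1) (snd w2) = take k2 (snd w2) @ [snd w2 ! k2]"
        using ck k2l by (simp add: take_Suc_conv_app_nth)
      also have "\<dots> = take k1 (snd w1) @ [snd w1 ! k1]" using ct nx by simp
      also have "\<dots> = take (Suc k1) (snd w1)" using k1l by (simp add: take_Suc_conv_app_nth)
      finally have "take (Suc k1) (snd w2) = take (Suc k1) (snd w1)" .
      moreover have "Suc k1 \<le> length (snd w1)" using k1l by linarith
      ultimately have "Suc k1 \<in> lcps w1" unfolding lcps_def using w2 ne cf by (intro CollectI bexI[of _ w2]) auto
      then show False using ge by fastforce
    qed
  qed
qed

lemma R_fin: "finite R"
proof -
  define Lt where "Lt = Fw ` qarrs Qb \<union> Bw ` qarrs Qb"
  have fL: "finite Lt" using finQb Lt_def by simp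
  have inL: "larr x \<in> qarrs Qb \<Longrightarrow> x \<in> Lt" for x using Lt_def by (cases x) auto
  define C where "C = (Inl ` qverts Qb \<union> Inr ` Lt) \<times> insert None (Some ` Lt)"
  have fC: "finite C" using fL finQb C_def by simp
  have "fmap ` R \<subseteq> C"
  proof
    fix y assume "y \<in> fmap ` R"
    then obtain w where w: "w \<in> R" and y: "y = fmap w" by blast
    have fv: "fst w \<in> qverts Qb" using str_fst[OF R_str[OF w]] .
    show "y \<in> C"
    proof (cases "lcps w = {}")
      case True then show ?thesis using y fv C_def by (simp add: fmap_def)
    next
      case False
      define k where "k = Max (lcps w)"
      have kl: "k < length (snd w)" using lcps_lt[OF w] Max_in[OF lcps_fin False] k_def by simp
      have l1: "snd w ! k \<in> Lt" using inL str_arr[OF R_str[OF w] kl] by simp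
      have l2: "snd w ! (k - 1) \<in> Lt" using inL str_arr[OF R_str[OF w], of "k - 1"] kl by simp
      show ?thesis using y fv C_def l1 l2 False k_def by (simp add: fmap_def)
    qed
  qed
  then have "finite (fmap ` R)" using fC finite_subset by blast
  then show ?thesis using finite_imageD fmap_inj by blast
qed

lemma F_fin: "finite F"
proof -
  have "F \<subseteq> (\<lambda>w. {w, winv Qb w}) ` R"
  proof
    fix c assume c: "c \<in> F"
    then have "c \<in> walks Qb" using face by (auto simp: nk_faces_def)
    then obtain w where cw: "c = {w, winv Qb w}" and w: "is_walk Qb w" by (auto simp: walks_def)
    then have "w \<in> R" using c by (auto simp: R_def)
    then show "c \<in> (\<lambda>w. {w, winv Qb w}) ` R" using cw by blast
  qed
  then show ?thesis using R_fin finite_surj by blast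
qed

end


theorem proposition4p15:
  fixes Q Qb :: "('v, 'a) bquiver" and F :: "('v, 'a) word set set"
  assumes "gentle Q"
    and "blossoming Q Qb"
    and "F \<in> nk_faces Q Qb"
  shows "finite F"
proof -
  interpret gset Q Qb F using assms by unfold_locales
  show ?thesis by (rule F_fin)
qed

end
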